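(* For every $d\in\mathbb{N}$ there exist non-empty families $\mathcal{F}_1,\dots,\mathcal{F}_{3d-1}$ of axis-parallel boxes in $\mathbb{R}^d$ such that (i) every colorful $(3d-1)$-tuple is $2$-pierceable, and (ii) for each $i\in[3d-1]$, $\mathcal{F}_i$ is not $2$-pierceable.
   Context: An axis-parallel box in $\mathbb{R}^d$ is a set $[\alpha_1,\beta_1]\times\dots\times[\alpha_d,\beta_d]$ with real $\alpha_j\le\beta_j$. A family is $2$-pierceable if some set of at most $2$ points meets every member. A colorful $(3d-1)$-tuple from $\mathcal{F}_1,\dots,\mathcal{F}_{3d-1}$ is a tuple containing exactly one member from each family (with distinct family indices). *)

theory Defs
  imports "HOL-Analysis.Analysis"
begin

definition axis_box :: "(real^'n) set \<Rightarrow> bool" where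
  "axis_box B \<longleftrightarrow> (\<exists>a b. (\<forall>j. a$j \<le> b$j) \<and> B = cbox a b)"

definition pierceable :: "nat \<Rightarrow> 'a set set \<Rightarrow> bool" where
  "pierceable k F \<longleftrightarrow> (\<exists>P. finite P \<and> card P \<le> k \<and> (\<forall>B\<in>F. P \<inter> B \<noteq> {}))"

end

theory Submission
  imports Defs
begin

definition slab :: "'n::finite \<Rightarrow> real \<Rightarrow> (real^'n) set" where
  "slab j t = cbox (\<chi> k. if k = j then t else 0) (\<chi> k. if k = j then t else 6)"

definition zb :: "'n::finite \<Rightarrow> 'n \<Rightarrow> real \<Rightarrow> real \<Rightarrow> (real^'n) set" where
  "zb c j a b = cbox (\<chi> k. if k = c then a else if k = j then b else 0)
                     (\<chi> k. if k = c then a + 2 else if k = j then b + 2 else 6)"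

lemma mem_slab: "x \<in> slab j t \<longleftrightarrow> x$j = t \<and> (\<forall>k. k \<noteq> j \<longrightarrow> 0 \<le> x$k \<and> x$k \<le> 6)"
proof -
  have "x \<in> slab j t \<longleftrightarrow> (\<forall>i. (if i = j then t else 0) \<le> x$i \<and> x$i \<le> (if i = j then t else 6))"
    unfolding slab_def mem_box_cart by simp
  also have "\<dots> \<longleftrightarrow> x$j = t \<and> (\<forall>k. k \<noteq> j \<longrightarrow> 0 \<le> x$k \<and> x$k \<le> 6)"
  proof
    assume H: "\<forall>i. (if i = j then t else 0) \<le> x$i \<and> x$i \<le> (if i = j then t else 6)"
    show "x$j = t \<and> (\<forall>k. k \<noteq> j \<longrightarrow> 0 \<le> x$k \<and> x$k \<le> 6)"
    proof
      show "x$j = t" using H[rule_format, of j] by simp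
      show "\<forall>k. k \<noteq> j \<longrightarrow> 0 \<le> x$k \<and> x$k \<le> 6"
        using H by (metis (full_types))
    qed
  next
    assume "x$j = t \<and> (\<forall>k. k \<noteq> j \<longrightarrow> 0 \<le> x$k \<and> x$k \<le> 6)"
    then show "\<forall>i. (if i = j then t else 0) \<le> x$i \<and> x$i \<le> (if i = j then t else 6)"
      by simp
  qed
  finally show ?thesis .
qed

lemma mem_zb: "c \<noteq> j \<Longrightarrow> x \<in> zb c j a b \<longleftrightarrow>
   a \<le> x$c \<and> x$c \<le> a + 2 \<and> b \<le> x$j \<and> x$j \<le> b + 2 \<and>
   (\<forall>k. k \<noteq> c \<and> k \<noteq> j \<longrightarrow> 0 \<le> x$k \<and> x$k \<le> 6)"
proof -
  assume cj: "c \<noteq> j"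
  have "x \<in> zb c j a b \<longleftrightarrow> (\<forall>i. (if i = c then a else if i = j then b else 0) \<le> x$i \<and>
      x$i \<le> (if i = c then a + 2 else if i = j then b + 2 else 6))"
    unfolding zb_def mem_box_cart by simp
  also have "\<dots> \<longleftrightarrow> a \<le> x$c \<and> x$c \<le> a + 2 \<and> b \<le> x$j \<and> x$j \<le> b + 2 \<and>
   (\<forall>k. k \<noteq> c \<and> k \<noteq> j \<longrightarrow> 0 \<le> x$k \<and> x$k \<le> 6)"
  proof
    assume H: "\<forall>i. (if i = c then a else if i = j then b else 0) \<le> x$i \<and>
      x$i \<le> (if i = c then a + 2 else if i = j then b + 2 else 6)"
    have 1: "a \<le> x$c \<and> x$c \<le> a + 2" using H[rule_format, of c] by simp
    have 2: "b \<le> x$j \<and> x$j \<le> b + 2" using H[rule_format, of j] cj by simp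
    have 3: "\<forall>k. k \<noteq> c \<and> k \<noteq> j \<longrightarrow> 0 \<le> x$k \<and> x$k \<le> 6"
    proof (intro allI impI)
      fix k assume "k \<noteq> c \<and> k \<noteq> j"
      then show "0 \<le> x$k \<and> x$k \<le> 6" using H[rule_format, of k] by simp
    qed
    show "a \<le> x$c \<and> x$c \<le> a + 2 \<and> b \<le> x$j \<and> x$j \<le> b + 2 \<and>
   (\<forall>k. k \<noteq> c \<and> k \<noteq> j \<longrightarrow> 0 \<le> x$k \<and> x$k \<le> 6)" using 1 2 3 by blast
  next
    assume H: "a \<le> x$c \<and> x$c \<le> a + 2 \<and> b \<le> x$j \<and> x$j \<le> b + 2 \<and>
   (\<forall>k. k \<noteq> c \<and> k \<noteq> j \<longrightarrow> 0 \<le> x$k \<and> x$k \<le> 6)"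
    show "\<forall>i. (if i = c then a else if i = j then b else 0) \<le> x$i \<and>
      x$i \<le> (if i = c then a + 2 else if i = j then b + 2 else 6)"
    proof
      fix i show "(if i = c then a else if i = j then b else 0) \<le> x$i \<and>
      x$i \<le> (if i = c then a + 2 else if i = j then b + 2 else 6)"
        using H cj by (cases "i = c"; cases "i = j") auto
    qed
  qed
  finally show ?thesis .
qed

lemma box_slab: "axis_box (slab j t)"
  unfolding axis_box_def slab_def by (rule exI[of _ "(\<chi> k. if k = j then t else 0)"],
    rule exI[of _ "(\<chi> k. if k = j then t else 6)"]) auto

lemma box_zb: "axis_box (zb c j a b)"
  unfolding axis_box_def zb_def by (rule exI[of _ "(\<chi> k. if k = c then a else if k = j then b else 0)"],
    rule exI[of _ "(\<chi> k. if k = c then a + 2 else if k = j then b + 2 else 6)"]) auto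

lemma not_pierce3:
  assumes "B1 \<in> F" "B2 \<in> F" "B3 \<in> F" "B1 \<inter> B2 = {}" "B1 \<inter> B3 = {}" "B2 \<inter> B3 = {}"
  shows "\<not> pierceable 2 F"
proof
  assume "pierceable 2 F"
  then obtain P where P: "finite P" "card P \<le> 2" "\<forall>B\<in>F. P \<inter> B \<noteq> {}"
    unfolding pierceable_def by blast
  obtain p1 where p1: "p1 \<in> P" "p1 \<in> B1" using P(3) assms(1) by blast
  obtain p2 where p2: "p2 \<in> P" "p2 \<in> B2" using P(3) assms(2) by blast
  obtain p3 where p3: "p3 \<in> P" "p3 \<in> B3" using P(3) assms(3) by blast
  have d: "p1 \<noteq> p2" "p1 \<noteq> p3" "p2 \<noteq> p3" using p1 p2 p3 assms(4-6) by blast+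
  have "card {p1, p2, p3} = 3" using d by simp
  moreover have "card {p1, p2, p3} \<le> card P" using p1 p2 p3 P(1) by (intro card_mono) auto
  ultimately show False using P(2) by simp
qed

lemma slab_np: "\<not> pierceable 2 (slab j ` {t1, t2, t3})"
  if "t1 \<noteq> t2" "t1 \<noteq> t3" "t2 \<noteq> t3"
  by (rule not_pierce3[of "slab j t1" _ "slab j t2" "slab j t3"]) (use that in \<open>auto simp: mem_slab\<close>)

lemma zb_np: "c \<noteq> j \<Longrightarrow> \<not> pierceable 2 {zb c j 0 0, zb c j 4 4, zb c j 0 4}"
  by (rule not_pierce3[of "zb c j 0 0" _ "zb c j 4 4" "zb c j 0 4"]) (auto simp: mem_zb)

theorem theorem9:
  shows "\<exists>F :: nat \<Rightarrow> (real^'n::finite) set set.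
     (\<forall>i\<in>{1..3 * CARD('n) - 1}. F i \<noteq> {} \<and> (\<forall>B\<in>F i. axis_box B))
   \<and> (\<forall>f. (\<forall>i\<in>{1..3 * CARD('n) - 1}. f i \<in> F i)
          \<longrightarrow> pierceable 2 (f ` {1..3 * CARD('n) - 1}))
   \<and> (\<forall>i\<in>{1..3 * CARD('n) - 1}. \<not> pierceable 2 (F i))"
proof -
  define d where "d = CARD('n)"
  have d1: "d \<ge> 1" unfolding d_def by (simp add: Suc_leI)
  obtain e :: "nat \<Rightarrow> 'n" where e: "bij_betw e {0..<d} UNIV"
    using ex_bij_betw_nat_finite[of "UNIV::'n set"] d_def by auto
  have inje: "inj_on e {0..<d}" using e bij_betw_imp_inj_on by blast
  define r where "r = the_inv_into {0..<d} e"
  have r1: "r j < d" for j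
    using the_inv_into_into[OF inje, of j "{0..<d}"] e unfolding r_def bij_betw_def by auto
  have r2: "e (r j) = j" for j
    using f_the_inv_into_f_bij_betw[OF e] unfolding r_def by auto
  have r3: "i < d \<Longrightarrow> r (e i) = i" for i
    using the_inv_into_f_f[OF inje] unfolding r_def by auto
  define c0 where "c0 = e 0"
  have rc0: "j \<noteq> c0 \<Longrightarrow> r j \<noteq> 0" for j using r2[of j] unfolding c0_def by metis
  define F :: "nat \<Rightarrow> (real^'n) set set" where "F i = (if i \<le> d then slab (e (i-1)) ` {0,1,2}
     else if i \<le> 2*d then slab (e (i-d-1)) ` {4,5,6}
     else {zb c0 (e (i-2*d)) 0 0, zb c0 (e (i-2*d)) 4 4, zb c0 (e (i-2*d)) 0 4})" for i
  define I where "I = {1..3*d-1}"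
  have zne: "e (i-2*d) \<noteq> c0" if "2*d < i" "i \<le> 3*d-1" for i
  proof
    assume "e (i-2*d) = c0"
    then have "e (i-2*d) = e 0" unfolding c0_def .
    moreover have "i - 2*d \<in> {0..<d}" "(0::nat) \<in> {0..<d}" using that d1 by auto
    ultimately have "i - 2*d = 0" using inje by (meson inj_onD)
    then show False using that by simp
  qed
  have A: "\<forall>i\<in>I. F i \<noteq> {} \<and> (\<forall>B\<in>F i. axis_box B)"
    unfolding I_def F_def by (auto simp: box_slab box_zb)
  have C: "\<forall>i\<in>I. \<not> pierceable 2 (F i)"
  proof
    fix i assume i: "i \<in> I"
    show "\<not> pierceable 2 (F i)"
    proof (cases "i \<le> d")
      case True
      then show ?thesis unfolding F_def using slab_np[of 0 1 2 "e (i-1)"] by simp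
    next
      case False
      show ?thesis
      proof (cases "i \<le> 2*d")
        case True
        then show ?thesis unfolding F_def using False slab_np[of 4 5 6 "e (i-d-1)"] by simp
      next
        case False2: False
        then show ?thesis unfolding F_def using False zb_np[OF zne[of i, symmetric]] i I_def
          by auto
      qed
    qed
  qed
  have B: "pierceable 2 (f ` I)" if hf: "\<forall>i\<in>I. f i \<in> F i" for f
  proof -
    have ex0: "\<exists>t. t\<in>{0,1,2} \<and> f (r j + 1) = slab j t" for j
    proof -
      have "r j + 1 \<in> I" using r1[of j] d1 unfolding I_def by auto
      then have "f (r j + 1) \<in> F (r j + 1)" using hf by blast
      then show ?thesis unfolding F_def using r1[of j] r2[of j] by auto
    qed
    have ex1: "\<exists>t. t\<in>{4,5,6} \<and> f (d + r j + 1) = slab j t" for j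
    proof -
      have "d + r j + 1 \<in> I" using r1[of j] d1 unfolding I_def by auto
      then have "f (d + r j + 1) \<in> F (d + r j + 1)" using hf by blast
      then show ?thesis unfolding F_def using r1[of j] r2[of j] by auto
    qed
    have exz: "\<exists>ab. ab \<in> {(0,0),(4,4),(0,4)} \<and> f (2*d + r j) = zb c0 j (fst ab) (snd ab)"
      if "j \<noteq> c0" for j
    proof -
      have "2*d + r j \<in> I" using r1[of j] rc0[OF that] d1 unfolding I_def by auto
      then have "f (2*d + r j) \<in> F (2*d + r j)" using hf by blast
      then show ?thesis unfolding F_def using r1[of j] r2[of j] rc0[OF that] by auto
    qed
    define u0 where "u0 j = (SOME t. t\<in>{0,1,2} \<and> f (r j + 1) = slab j t)" for j
    define u1 where "u1 j = (SOME t. t\<in>{4,5,6} \<and> f (d + r j + 1) = slab j t)" for j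
    define ab where "ab j = (SOME ab. ab \<in> {(0,0),(4,4),(0,4)} \<and> f (2*d + r j) = zb c0 j (fst ab) (snd ab))" for j
    have u0: "u0 j \<in> {0,1,2} \<and> f (r j + 1) = slab j (u0 j)" for j
      unfolding u0_def by (rule someI_ex[OF ex0])
    have u1: "u1 j \<in> {4,5,6} \<and> f (d + r j + 1) = slab j (u1 j)" for j
      unfolding u1_def by (rule someI_ex[OF ex1])
    have abP: "ab j \<in> {(0,0),(4,4),(0,4)} \<and> f (2*d + r j) = zb c0 j (fst (ab j)) (snd (ab j))"
      if "j \<noteq> c0" for j
      unfolding ab_def by (rule someI_ex[OF exz[OF that]])
    define fl where "fl j = (j \<noteq> c0 \<and> fst (ab j) \<noteq> snd (ab j))" for j
    define p :: "real^'n" where "p = (\<chi> j. if fl j then u1 j else u0 j)"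
    define q :: "real^'n" where "q = (\<chi> j. if fl j then u0 j else u1 j)"
    have b0: "0 \<le> u0 j \<and> u0 j \<le> 2" for j using u0[of j] by auto
    have b1: "4 \<le> u1 j \<and> u1 j \<le> 6" for j using u1[of j] by auto
    have pb: "0 \<le> p$k \<and> p$k \<le> 6" for k using b0[of k] b1[of k] unfolding p_def by auto
    have qb: "0 \<le> q$k \<and> q$k \<le> 6" for k using b0[of k] b1[of k] unfolding q_def by auto
    have hit: "p \<in> f i \<or> q \<in> f i" if i: "i \<in> I" for i
    proof (cases "i \<le> d")
      case True
      define j where "j = e (i-1)"
      have "r j = i - 1" unfolding j_def using True i I_def by (intro r3) auto
      then have "i = r j + 1" using i I_def by auto
      then have fi: "f i = slab j (u0 j)" using u0[of j] by simp
      show ?thesis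
      proof (cases "fl j")
        case True
        then show ?thesis unfolding fi mem_slab using qb by (simp add: q_def)
      next
        case False
        then show ?thesis unfolding fi mem_slab using pb by (simp add: p_def)
      qed
    next
      case False
      show ?thesis
      proof (cases "i \<le> 2*d")
        case True
        define j where "j = e (i-d-1)"
        have "r j = i - d - 1" unfolding j_def using True False by (intro r3) auto
        then have "i = d + r j + 1" using False by auto
        then have fi: "f i = slab j (u1 j)" using u1[of j] by simp
        show ?thesis
        proof (cases "fl j")
          case True
          then show ?thesis unfolding fi mem_slab using pb by (simp add: p_def)
        next
          case False
          then show ?thesis unfolding fi mem_slab using qb by (simp add: q_def)
        qed
      next
        case False2: False
        define j where "j = e (i-2*d)"
        have jc: "j \<noteq> c0" unfolding j_def using zne False2 i I_def by auto
        have "r j = i - 2*d" unfolding j_def using False2 i I_def by (intro r3) auto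
        then have "i = 2*d + r j" using False2 by auto
        then have fi: "f i = zb c0 j (fst (ab j)) (snd (ab j))" using abP[OF jc] by simp
        have flc: "\<not> fl c0" unfolding fl_def by simp
        have flj: "fl j \<longleftrightarrow> fst (ab j) \<noteq> snd (ab j)" unfolding fl_def using jc by simp
        have "ab j \<in> {(0,0),(4,4),(0,4)}" using abP[OF jc] by simp
        then consider "ab j = (0,0)" | "ab j = (4,4)" | "ab j = (0,4)" by blast
        then show ?thesis
        proof cases
          case 1
          then have "p \<in> f i" unfolding fi mem_zb[OF jc[symmetric]]
            using pb flc flj b0[of c0] b0[of j] by (simp add: p_def)
          then show ?thesis by blast
        next
          case 2
          then have "q \<in> f i" unfolding fi mem_zb[OF jc[symmetric]]
            using qb flc flj b1[of c0] b1[of j] by (simp add: q_def)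
          then show ?thesis by blast
        next
          case 3
          then have "p \<in> f i" unfolding fi mem_zb[OF jc[symmetric]]
            using pb flc flj b0[of c0] b1[of j] by (simp add: p_def)
          then show ?thesis by blast
        qed
      qed
    qed
    show ?thesis unfolding pierceable_def
    proof (intro exI[of _ "{p,q}"] conjI ballI)
      show "finite {p,q}" by simp
      show "card {p,q} \<le> 2" by (cases "p = q") auto
    next
      fix B assume "B \<in> f ` I"
      then obtain i where "i \<in> I" "B = f i" by blast
      then show "{p,q} \<inter> B \<noteq> {}" using hit by blast
    qed
  qed
  show ?thesis
    apply (rule exI[of _ F])
    using A B C unfolding I_def d_def by blast
qed

end
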